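(* Let $X$ be a Banach space as described in the context, let $f\in X$ with $f(z)=\sum_{k=0}^\infty c_kz^k$ in $\mathbb{D}$, and assume $\lim_{n\to\infty}\|f-S_n(f)\|=0$, where $S_n(f)(z)=\sum_{k=0}^{n}c_kz^k$ is the $n$-th partial sum of the Taylor series of $f$. Then there exists a sequence $p_n\in\mathcal{P}_n[\mathbb{Z}]$ with $\lim_{n\to\infty}\|f-p_n\|=0$ if and only if all coefficients $c_k$ are integers.
   Context: $\mathbb{D}=\{z\in\mathbb{C}:|z|<1\}$. $X$ is a complex Banach space of functions analytic in $\mathbb{D}$ whose norm $\|\cdot\|$ satisfies: (i) $\|f(\cdot\, e^{it})\|=\|f(\cdot)\|$ for all $t\in\mathbb{R}$ and $f\in X$; (ii) $\|f\|<\infty$ for every entire function $f$; (iii) for all $f\in X$ and $g\in L[0,2\pi]$, $\big\|\frac{1}{2\pi}\int_0^{2\pi} f(ze^{it})g(t)\,dt\big\|\le \frac{1}{2\pi}\int_0^{2\pi}|g(t)|\,dt\cdot\|f\|$. A complex number is called an integer if its real and imaginary parts are integers; $\mathcal{P}_n[\mathbb{Z}]$ is the set of complex polynomials of degree at most $n-1$ with integer coefficients in this sense. *)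

theory Defs
  imports "HOL-Analysis.Analysis" "HOL-Computational_Algebra.Polynomial"
begin

text \<open>Elements of the space are functions complex => complex; only their values on the
  unit disk matter (membership and norm depend only on the restriction to the disk).\<close>

definition unit_disk :: "complex set" where
  "unit_disk = ball 0 1"

definition gauss_int :: "complex \<Rightarrow> bool" where
  "gauss_int z \<longleftrightarrow> Re z \<in> \<int> \<and> Im z \<in> \<int>"

text \<open>P_n[Z]: polynomials of degree at most n-1 (only the zero polynomial for n = 0)
  with Gaussian-integer coefficients.\<close>
definition int_polys :: "nat \<Rightarrow> complex poly set" where
  "int_polys n = {p. (\<forall>i. gauss_int (coeff p i)) \<and> (p = 0 \<or> degree p < n)}"

definition rot_conv :: "(complex \<Rightarrow> complex) \<Rightarrow> (real \<Rightarrow> complex) \<Rightarrow> complex \<Rightarrow> complex" where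
  "rot_conv f g = (\<lambda>z. (1 / (2 * of_real pi)) *
      (LINT t:{0..2*pi}|lborel. (f (z * exp (\<i> * of_real t)) * g t :: complex)))"

definition admissible_space :: "(complex \<Rightarrow> complex) set \<Rightarrow> ((complex \<Rightarrow> complex) \<Rightarrow> real) \<Rightarrow> bool" where
  "admissible_space X N \<longleftrightarrow>
     \<comment> \<open>functions analytic in the disk; only disk values matter\<close>
     (\<forall>f\<in>X. f holomorphic_on unit_disk) \<and>
     (\<forall>f g. (\<forall>z\<in>unit_disk. f z = g z) \<longrightarrow> (f \<in> X \<longleftrightarrow> g \<in> X) \<and> N f = N g) \<and>
     \<comment> \<open>complex vector space\<close>
     (\<lambda>z. 0) \<in> X \<and>
     (\<forall>f\<in>X. \<forall>g\<in>X. (\<lambda>z. f z + g z) \<in> X) \<and>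
     (\<forall>f\<in>X. \<forall>c. (\<lambda>z. c * f z) \<in> X) \<and>
     \<comment> \<open>norm\<close>
     (\<forall>f\<in>X. N f \<ge> 0) \<and>
     (\<forall>f\<in>X. N f = 0 \<longleftrightarrow> (\<forall>z\<in>unit_disk. f z = 0)) \<and>
     (\<forall>f\<in>X. \<forall>g\<in>X. N (\<lambda>z. f z + g z) \<le> N f + N g) \<and>
     (\<forall>f\<in>X. \<forall>c. N (\<lambda>z. c * f z) = cmod c * N f) \<and>
     \<comment> \<open>completeness\<close>
     (\<forall>F. (\<forall>n. F n \<in> X) \<and>
          (\<forall>e>0. \<exists>M. \<forall>m\<ge>M. \<forall>n\<ge>M. N (\<lambda>z. F m z - F n z) < e) \<longrightarrow>
          (\<exists>f\<in>X. (\<lambda>n. N (\<lambda>z. F n z - f z)) \<longlonglongrightarrow> 0)) \<and>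
     \<comment> \<open>(i) rotation invariance\<close>
     (\<forall>f\<in>X. \<forall>t::real. (\<lambda>z. f (z * exp (\<i> * of_real t))) \<in> X \<and>
                        N (\<lambda>z. f (z * exp (\<i> * of_real t))) = N f) \<and>
     \<comment> \<open>(ii) every entire function has finite norm, i.e. belongs to X\<close>
     (\<forall>f. f holomorphic_on UNIV \<longrightarrow> f \<in> X) \<and>
     \<comment> \<open>(iii) convolution inequality\<close>
     (\<forall>f\<in>X. \<forall>g::real \<Rightarrow> complex. set_integrable lborel {0..2*pi} g \<longrightarrow>
        rot_conv f g \<in> X \<and>
        N (rot_conv f g) \<le> (1 / (2 * pi)) * (LINT t:{0..2*pi}|lborel. cmod (g t)) * N f)"

end

theory Submission imports Defs begin

lemma exp_int_integral:
  fixes m :: int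
  shows "((\<lambda>t. exp (\<i> * of_int m * of_real t)) has_integral (if m = 0 then of_real (2*pi) else 0)) {0..2*pi}"
proof (cases "m = 0")
  case True
  then show ?thesis using has_integral_const_real[of "1::complex" 0 "2*pi"]
    by (simp add: scaleR_conv_of_real)
next
  case False
  have d: "((\<lambda>t. exp (\<i> * of_int m * of_real t) / (\<i> * of_int m)) has_vector_derivative exp (\<i> * of_int m * of_real t)) (at t within {0..2*pi})" for t
    using False
    by (auto intro!: derivative_eq_intros has_vector_derivative_real_field simp: field_simps)
  have "((\<lambda>t. exp (\<i> * of_int m * of_real t)) has_integral
     (exp (\<i> * of_int m * of_real (2*pi)) / (\<i> * of_int m) - exp (\<i> * of_int m * of_real 0) / (\<i> * of_int m))) {0..2*pi}"
    by (rule fundamental_theorem_of_calculus) (use d in auto)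
  moreover have "exp (\<i> * of_int m * of_real (2*pi)) = 1"
  proof -
    have "exp (of_real (2 * of_int m * pi) * \<i>) = 1"
      by (rule exp_integer_2pi) (simp add: Ints_of_int)
    moreover have "of_real (2 * of_int m * pi) * \<i> = \<i> * of_int m * of_real (2*pi)"
      by simp
    ultimately show ?thesis by (simp only:)
  qed
  ultimately show ?thesis using False by simp
qed

lemma set_integrable_cont:
  fixes g :: "real \<Rightarrow> complex"
  assumes "continuous_on {0..2*pi} g"
  shows "set_integrable lborel {0..2*pi} g"
  unfolding set_integrable_def by (rule borel_integrable_compact) (use assms in auto)

lemma rot_conv_poly:
  "rot_conv (\<lambda>z. \<Sum>j\<le>M. b j * z^j) (\<lambda>t. exp (- (\<i> * of_nat k * of_real t))) z
     = (if k \<le> M then b k * z^k else 0)"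
proof -
  have eq: "(\<Sum>j\<le>M. b j * (z * exp(\<i> * of_real t))^j) * exp(-(\<i> * of_nat k * of_real t))
     = (\<Sum>j\<le>M. (b j * z^j) * exp(\<i> * of_int (int j - int k) * of_real t))" for t
  proof -
    have "b j * (z * exp(\<i> * of_real t))^j * exp(-(\<i> * of_nat k * of_real t))
       = (b j * z^j) * exp(\<i> * of_int (int j - int k) * of_real t)" (is "?L j = ?R j") for j
    proof -
      have h2: "(z * exp(\<i> * of_real t))^j = z^j * exp (of_nat j * (\<i> * of_real t))"
        by (simp only: power_mult_distrib exp_of_nat_mult)
      have a1: "of_nat j * (\<i> * of_real t) + (-(\<i> * of_nat k * of_real t)) = \<i> * of_int (int j - int k) * (of_real t::complex)"
        by (simp add: algebra_simps)
      have "?L j = b j * z^j * (exp (of_nat j * (\<i> * of_real t)) * exp(-(\<i> * of_nat k * of_real t)))"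
        by (simp only: h2 mult.assoc)
      also have "\<dots> = b j * z^j * exp (of_nat j * (\<i> * of_real t) + (-(\<i> * of_nat k * of_real t)))"
        by (simp only: exp_add)
      also have "\<dots> = ?R j"
        by (simp only: a1)
      finally show ?thesis .
    qed
    then show ?thesis by (simp only: sum_distrib_right)
  qed
  have hi: "((\<lambda>t. \<Sum>j\<le>M. (b j * z^j) * exp(\<i> * of_int (int j - int k) * of_real t)) has_integral
     (\<Sum>j\<le>M. (b j * z^j) * (if int j - int k = 0 then of_real (2*pi) else 0))) {0..2*pi}"
    by (intro has_integral_sum finite_atMost has_integral_mult_right exp_int_integral)
  have sv: "(\<Sum>j\<le>M. (b j * z^j) * (if int j - int k = 0 then of_real (2*pi) else 0))
      = (if k \<le> M then of_real (2*pi) * (b k * z^k) else 0)"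
  proof -
    have "(\<Sum>j\<le>M. (b j * z^j) * (if int j - int k = 0 then of_real (2*pi) else 0))
       = (\<Sum>j\<le>M. if j = k then of_real (2*pi) * (b j * z^j) else 0)"
      by (intro sum.cong) auto
    also have "\<dots> = (if k \<le> M then of_real (2*pi) * (b k * z^k) else 0)"
      by (subst sum.delta) auto
    finally show ?thesis .
  qed
  have si: "set_integrable lborel {0..2*pi} (\<lambda>t. (\<Sum>j\<le>M. b j * (z * exp(\<i> * of_real t))^j) * exp(-(\<i> * of_nat k * of_real t)))"
    by (intro set_integrable_cont continuous_intros)
  have "(LINT t:{0..2*pi}|lborel. (\<Sum>j\<le>M. b j * (z * exp(\<i> * of_real t))^j) * exp(-(\<i> * of_nat k * of_real t)))
     = integral {0..2*pi} (\<lambda>t. (\<Sum>j\<le>M. b j * (z * exp(\<i> * of_real t))^j) * exp(-(\<i> * of_nat k * of_real t)))"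
    by (rule set_borel_integral_eq_integral(2)[OF si])
  also have "\<dots> = (if k \<le> M then of_real (2*pi) * (b k * z^k) else 0)"
    unfolding eq by (rule integral_unique[OF hi[unfolded sv]])
  finally have L: "(LINT t:{0..2*pi}|lborel. (\<Sum>j\<le>M. b j * (z * exp(\<i> * of_real t))^j) * exp(-(\<i> * of_nat k * of_real t)))
     = (if k \<le> M then of_real (2*pi) * (b k * z^k) else 0)" .
  have pi0: "complex_of_real pi \<noteq> 0" by simp
  show ?thesis unfolding rot_conv_def L using pi0 by (cases "k \<le> M") simp_all
qed

lemma poly_sum_ext:
  fixes p :: "complex poly"
  assumes "degree p \<le> M"
  shows "poly p z = (\<Sum>j\<le>M. coeff p j * z^j)"
proof -
  have "poly p z = (\<Sum>j\<le>degree p. coeff p j * z^j)" by (rule poly_altdef)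
  also have "\<dots> = (\<Sum>j\<le>M. coeff p j * z^j)"
    by (rule sum.mono_neutral_left) (use assms in \<open>auto simp: coeff_eq_0\<close>)
  finally show ?thesis .
qed

lemma poly_entire: "(\<lambda>z. poly (p::complex poly) z) holomorphic_on UNIV"
  unfolding poly_altdef by (intro holomorphic_intros)

lemma lint_one: "(LINT t:{0..2*pi}|lborel. (1::real)) = 2*pi"
proof -
  have si: "set_integrable lborel {0..2*pi} (\<lambda>t. (1::real))"
    unfolding set_integrable_def by (rule borel_integrable_compact) auto
  show ?thesis
    by (simp add: set_borel_integral_eq_integral(2)[OF si])
qed

theorem theorem5p3:
  fixes X :: "(complex \<Rightarrow> complex) set" and N :: "(complex \<Rightarrow> complex) \<Rightarrow> real"
    and f :: "complex \<Rightarrow> complex" and c :: "nat \<Rightarrow> complex"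
  assumes "admissible_space X N"
    and "f \<in> X"
    and "\<forall>z\<in>unit_disk. (\<lambda>k. c k * z ^ k) sums f z"
    and "(\<lambda>n. N (\<lambda>z. f z - (\<Sum>k\<le>n. c k * z ^ k))) \<longlonglongrightarrow> 0"
  shows "(\<exists>p :: nat \<Rightarrow> complex poly. (\<forall>n. p n \<in> int_polys n) \<and>
            (\<lambda>n. N (\<lambda>z. f z - poly (p n) z)) \<longlonglongrightarrow> 0)
         \<longleftrightarrow> (\<forall>k. gauss_int (c k))"
proof -
  note A = assms(1)[unfolded admissible_space_def]
  note c1 = A[THEN conjunct1]
  note c2 = A[THEN conjunct2, THEN conjunct1]
  note c3 = A[THEN conjunct2, THEN conjunct2, THEN conjunct1]
  note c4 = A[THEN conjunct2, THEN conjunct2, THEN conjunct2, THEN conjunct1]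
  note c5 = A[THEN conjunct2, THEN conjunct2, THEN conjunct2, THEN conjunct2, THEN conjunct1]
  note c6 = A[THEN conjunct2, THEN conjunct2, THEN conjunct2, THEN conjunct2, THEN conjunct2, THEN conjunct1]
  note c7 = A[THEN conjunct2, THEN conjunct2, THEN conjunct2, THEN conjunct2, THEN conjunct2, THEN conjunct2, THEN conjunct1]
  note c8 = A[THEN conjunct2, THEN conjunct2, THEN conjunct2, THEN conjunct2, THEN conjunct2, THEN conjunct2, THEN conjunct2, THEN conjunct1]
  note c9 = A[THEN conjunct2, THEN conjunct2, THEN conjunct2, THEN conjunct2, THEN conjunct2, THEN conjunct2, THEN conjunct2, THEN conjunct2, THEN conjunct1]
  note c10 = A[THEN conjunct2, THEN conjunct2, THEN conjunct2, THEN conjunct2, THEN conjunct2, THEN conjunct2, THEN conjunct2, THEN conjunct2, THEN conjunct2, THEN conjunct1]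
  note c11 = A[THEN conjunct2, THEN conjunct2, THEN conjunct2, THEN conjunct2, THEN conjunct2, THEN conjunct2, THEN conjunct2, THEN conjunct2, THEN conjunct2, THEN conjunct2, THEN conjunct1]
  note c12 = A[THEN conjunct2, THEN conjunct2, THEN conjunct2, THEN conjunct2, THEN conjunct2, THEN conjunct2, THEN conjunct2, THEN conjunct2, THEN conjunct2, THEN conjunct2, THEN conjunct2, THEN conjunct1]
  note c13 = A[THEN conjunct2, THEN conjunct2, THEN conjunct2, THEN conjunct2, THEN conjunct2, THEN conjunct2, THEN conjunct2, THEN conjunct2, THEN conjunct2, THEN conjunct2, THEN conjunct2, THEN conjunct2]
  have Xadd: "\<And>f g. f \<in> X \<Longrightarrow> g \<in> X \<Longrightarrow> (\<lambda>z. f z + g z) \<in> X" using c4 by blast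
  have Xsc: "\<And>f a. f \<in> X \<Longrightarrow> (\<lambda>z. a * f z) \<in> X" using c5 by blast
  have Nnn: "\<And>f. f \<in> X \<Longrightarrow> N f \<ge> 0" using c6 by blast
  have Nz: "\<And>f. f \<in> X \<Longrightarrow> N f = 0 \<longleftrightarrow> (\<forall>z\<in>unit_disk. f z = 0)" using c7 by blast
  have Ntri: "\<And>f g. f \<in> X \<Longrightarrow> g \<in> X \<Longrightarrow> N (\<lambda>z. f z + g z) \<le> N f + N g" using c8 by blast
  have Nsc: "\<And>f a. f \<in> X \<Longrightarrow> N (\<lambda>z. a * f z) = cmod a * N f" using c9 by blast
  have Xent: "\<And>f. f holomorphic_on UNIV \<Longrightarrow> f \<in> X" using c12 by blast
  have Nconv: "\<And>f g. f \<in> X \<Longrightarrow> set_integrable lborel {0..2*pi} g \<Longrightarrow>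
        N (rot_conv f g) \<le> (1 / (2 * pi)) * (LINT t:{0..2*pi}|lborel. cmod (g t)) * N f"
    using c13 by blast
  have Xdiff: "(\<lambda>z. f z - g z) \<in> X" if "f \<in> X" "g \<in> X" for f g
  proof -
    have "(\<lambda>z. f z + (-1) * g z) \<in> X" using that Xadd Xsc by blast
    moreover have "(\<lambda>z. f z + (-1) * g z) = (\<lambda>z. f z - g z)" by (rule ext) simp
    ultimately show ?thesis by simp
  qed
  have Nswap: "N (\<lambda>z. f z - g z) = N (\<lambda>z. g z - f z)" if "f \<in> X" "g \<in> X" for f g
  proof -
    have "N (\<lambda>z. (-1) * (g z - f z)) = cmod (-1) * N (\<lambda>z. g z - f z)"
      using Nsc Xdiff that by blast
    moreover have "(\<lambda>z. (-1) * (g z - f z)) = (\<lambda>z. f z - g z)" by (rule ext) simp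
    ultimately show ?thesis by simp
  qed
  define S where "S m = (\<lambda>z. \<Sum>j\<le>m. c j * z^j)" for m
  have S_X: "S m \<in> X" for m
    unfolding S_def by (rule Xent) (intro holomorphic_intros)
  show ?thesis
  proof
    assume "\<exists>p :: nat \<Rightarrow> complex poly. (\<forall>n. p n \<in> int_polys n) \<and>
            (\<lambda>n. N (\<lambda>z. f z - poly (p n) z)) \<longlonglongrightarrow> 0"
    then obtain p :: "nat \<Rightarrow> complex poly" where pI: "\<And>n. p n \<in> int_polys n"
      and pL: "(\<lambda>n. N (\<lambda>z. f z - poly (p n) z)) \<longlonglongrightarrow> 0" by blast
    show "\<forall>k. gauss_int (c k)"
    proof
      fix k
      define a where "a n = coeff (p n) k" for n
      define Nk where "Nk = N (\<lambda>z. z^k)"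
      have zk_X: "(\<lambda>z. z^k) \<in> X" by (rule Xent) (intro holomorphic_intros)
      have Nk_pos: "Nk > 0"
      proof -
        have "(1/2::complex) \<in> unit_disk" by (simp add: unit_disk_def)
        moreover have "(1/2::complex)^k \<noteq> 0" by simp
        ultimately have "Nk \<noteq> 0" unfolding Nk_def using Nz[OF zk_X] by blast
        with Nnn[OF zk_X] show ?thesis unfolding Nk_def by linarith
      qed
      have fp_X: "(\<lambda>z. f z - poly (p n) z) \<in> X" for n
        by (rule Xdiff[OF assms(2) Xent[OF poly_entire]])
      have key: "cmod (c k - a n) * Nk \<le> N (\<lambda>z. f z - poly (p n) z)" for n
      proof -
        have bound: "cmod (c k - a n) * Nk \<le> N (\<lambda>z. f z - S m z) + N (\<lambda>z. f z - poly (p n) z)"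
          if mk: "m \<ge> k" for m
        proof -
          define Q where "Q = (\<Sum>j\<le>m. monom (c j) j) - p n"
          define M where "M = max k (degree Q)"
          have polyQ: "poly Q z = S m z - poly (p n) z" for z
            unfolding Q_def S_def by (simp add: poly_sum poly_monom)
          have cQ: "coeff Q k = c k - a n"
            unfolding Q_def a_def using mk by (simp add: coeff_sum_monom)
          have Qfun: "(\<lambda>z. poly Q z) = (\<lambda>z. \<Sum>j\<le>M. coeff Q j * z^j)"
            by (rule ext, rule poly_sum_ext) (simp add: M_def)
          have rc: "rot_conv (\<lambda>z. poly Q z) (\<lambda>t. exp (- (\<i> * of_nat k * of_real t)))
                = (\<lambda>z. (c k - a n) * z^k)"
            unfolding Qfun by (rule ext) (simp add: rot_conv_poly M_def cQ)
          have gi: "set_integrable lborel {0..2*pi} (\<lambda>t. exp (- (\<i> * of_nat k * of_real t)))"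
            by (intro set_integrable_cont continuous_intros)
          have ng: "cmod (exp (- (\<i> * of_nat k * of_real t))) = 1" for t :: real
            by (simp add: norm_exp_eq_Re)
          have QX: "(\<lambda>z. poly Q z) \<in> X" by (rule Xent[OF poly_entire])
          have "N (\<lambda>z. (c k - a n) * z^k) \<le> (1 / (2 * pi)) * (LINT t:{0..2*pi}|lborel. (1::real)) * N (\<lambda>z. poly Q z)"
            using Nconv[OF QX gi] unfolding rc ng .
          also have "\<dots> = N (\<lambda>z. poly Q z)" by (simp add: lint_one)
          also have "(\<lambda>z. poly Q z) = (\<lambda>z. (S m z - f z) + (f z - poly (p n) z))"
            by (rule ext) (simp add: polyQ)
          also have "N \<dots> \<le> N (\<lambda>z. S m z - f z) + N (\<lambda>z. f z - poly (p n) z)"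
            by (rule Ntri[OF Xdiff[OF S_X assms(2)] fp_X])
          also have "N (\<lambda>z. S m z - f z) = N (\<lambda>z. f z - S m z)"
            by (rule Nswap[OF S_X assms(2)])
          finally show ?thesis unfolding Nk_def Nsc[OF zk_X] .
        qed
        have lim: "(\<lambda>m. N (\<lambda>z. f z - S m z) + N (\<lambda>z. f z - poly (p n) z)) \<longlonglongrightarrow> 0 + N (\<lambda>z. f z - poly (p n) z)"
          by (intro tendsto_add tendsto_const) (use assms(4) in \<open>simp add: S_def\<close>)
        have "cmod (c k - a n) * Nk \<le> 0 + N (\<lambda>z. f z - poly (p n) z)"
          by (rule LIMSEQ_le_const[OF lim]) (use bound in blast)
        then show ?thesis by simp
      qed
      have "(\<lambda>n. cmod (a n - c k)) \<longlonglongrightarrow> 0"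
      proof (rule tendsto_sandwich[of "\<lambda>_. 0" _ _ "\<lambda>n. N (\<lambda>z. f z - poly (p n) z) / Nk"])
        show "\<forall>\<^sub>F n in sequentially. 0 \<le> cmod (a n - c k)" by simp
        show "\<forall>\<^sub>F n in sequentially. cmod (a n - c k) \<le> N (\<lambda>z. f z - poly (p n) z) / Nk"
        proof (rule always_eventually, rule allI)
          fix n
          have "cmod (a n - c k) = cmod (c k - a n)" by (simp add: norm_minus_commute)
          with key[of n] Nk_pos show "cmod (a n - c k) \<le> N (\<lambda>z. f z - poly (p n) z) / Nk"
            by (simp add: pos_le_divide_eq)
        qed
        show "(\<lambda>_. 0) \<longlonglongrightarrow> (0::real)" by simp
        show "(\<lambda>n. N (\<lambda>z. f z - poly (p n) z) / Nk) \<longlonglongrightarrow> 0"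
          using tendsto_divide[OF pL tendsto_const[of Nk]] Nk_pos by simp
      qed
      then have aL: "a \<longlonglongrightarrow> c k"
        by (rule LIM_zero_cancel[OF tendsto_norm_zero_iff[THEN iffD1]])
      have ga: "Re (a n) \<in> \<int> \<and> Im (a n) \<in> \<int>" for n
      proof -
        have "p n \<in> int_polys n" by (rule pI)
        then have "gauss_int (coeff (p n) k)" unfolding int_polys_def by simp
        then show ?thesis unfolding a_def gauss_int_def .
      qed
      have "Re (c k) \<in> \<int>"
        by (rule closed_sequentially[OF closed_Ints _ tendsto_Re[OF aL]]) (rule ga[THEN conjunct1])
      moreover have "Im (c k) \<in> \<int>"
        by (rule closed_sequentially[OF closed_Ints _ tendsto_Im[OF aL]]) (rule ga[THEN conjunct2])
      ultimately show "gauss_int (c k)" by (simp add: gauss_int_def)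
    qed
  next
    assume gc: "\<forall>k. gauss_int (c k)"
    define p where "p n = (\<Sum>j<n. monom (c j) j)" for n
    have g0: "gauss_int 0" by (simp add: gauss_int_def)
    have coeffp: "coeff (p n) i = (if i < n then c i else 0)" for n i
      unfolding p_def by (simp add: coeff_sum)
    have polyp: "poly (p n) z = (\<Sum>j<n. c j * z^j)" for n z
      unfolding p_def by (simp add: poly_sum poly_monom)
    have pI: "p n \<in> int_polys n" for n
    proof -
      have "\<forall>i. gauss_int (coeff (p n) i)" using gc g0 by (simp add: coeffp)
      moreover have "p n = 0 \<or> degree (p n) < n"
      proof (cases n)
        case 0 then show ?thesis by (simp add: p_def)
      next
        case (Suc m)
        have "degree (p n) \<le> m" by (rule degree_le) (simp add: coeffp Suc)
        then show ?thesis using Suc by simp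
      qed
      ultimately show ?thesis unfolding int_polys_def by blast
    qed
    have "(\<lambda>n. N (\<lambda>z. f z - poly (p (Suc n)) z)) \<longlonglongrightarrow> 0"
      unfolding polyp lessThan_Suc_atMost by (rule assms(4))
    then have "(\<lambda>n. N (\<lambda>z. f z - poly (p n) z)) \<longlonglongrightarrow> 0"
      by (rule LIMSEQ_imp_Suc)
    with pI show "\<exists>p :: nat \<Rightarrow> complex poly. (\<forall>n. p n \<in> int_polys n) \<and>
            (\<lambda>n. N (\<lambda>z. f z - poly (p n) z)) \<longlonglongrightarrow> 0" by blast
  qed
qed

end
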